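(* For every integer $m\ge 0$ and every real $a>-1$, $$\int_0^\infty\frac{dx}{(x^4+2ax^2+1)^{m+1}}=\frac{\pi}{2}\,\frac{P_m(a)}{[2(a+1)]^{m+1/2}},$$ where $$P_m(a)=\frac{(1/2)_m}{((2m)!)^2}\sum_{i=0}^m\frac{(2m-2i)!\,(2m+2i)!}{(m+1/2)_i\,(m-i)!}\binom{m}{i}\left(\frac{a+1}{2}\right)^{i}.$$ Equivalently, $P_m(a)=\sum_{j=0}^m d_{j,m}a^j$ with $$d_{j,m}=\frac{(1/2)_m}{((2m)!)^2}\sum_{i=j}^m\frac{(2m-2i)!\,(2m+2i)!}{(m+1/2)_i\,(m-i)!\,2^{i}}\binom{m}{i}\binom{i}{j}.$$
   Context: $(c)_k$ denotes the Pochhammer symbol (rising factorial): $(c)_0=1$, $(c)_k=c(c+1)\cdots(c+k-1)$ for $k\ge 1$. *)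

theory Defs
  imports "HOL-Analysis.Analysis"
begin

definition P :: "nat \<Rightarrow> real \<Rightarrow> real" where
  "P m a = pochhammer (1/2) m / (fact (2*m))^2 *
     (\<Sum>i=0..m. fact (2*m - 2*i) * fact (2*m + 2*i) /
        (pochhammer (real m + 1/2) i * fact (m - i)) * real (m choose i) * ((a + 1)/2)^i)"

definition d :: "nat \<Rightarrow> nat \<Rightarrow> real" where
  "d j m = pochhammer (1/2) m / (fact (2*m))^2 *
     (\<Sum>i=j..m. fact (2*m - 2*i) * fact (2*m + 2*i) /
        (pochhammer (real m + 1/2) i * fact (m - i) * 2^i) * real (m choose i) * real (i choose j))"

end

theory Submission
  imports Defs "HOL-Real_Asymp.Real_Asymp"
begin


definition bet :: "nat \<Rightarrow> nat \<Rightarrow> real" where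
 "bet m i = (if i \<le> m then 4^i/4^m * fact(2*(m-i))/(fact(m-i))^2 * fact(m+i)/(fact m * fact i) else 0)"

lemma poch_half: "pochhammer (1/2::real) n = fact (2*n) / (2^(2*n) * fact n)"
  using fact_double[of n, where 'a=real] by (simp add: field_simps)

lemma alpha_eq:
  "pochhammer (1/2) m / (fact (2*m))^2 * (fact (2*m - 2*i) * fact (2*m + 2*i) /
        (pochhammer (real m + 1/2) i * fact (m - i)) * real (m choose i)) = bet m i"
proof (cases "i \<le> m")
  case False thus ?thesis by (simp add: bet_def)
next
  case True
  have p: "pochhammer (1/2::real) (m+i) = pochhammer (1/2) m * pochhammer (real m + 1/2) i"
    using pochhammer_product'[of "1/2::real" m i] by (simp add: add.commute)
  have pm: "pochhammer (real m + 1/2) i = pochhammer (1/2::real) (m+i) / pochhammer (1/2) m"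
    using p by (simp add: pochhammer_eq_0_iff field_simps)
  have c: "real (m choose i) = fact m / (fact i * fact (m-i))" using binomial_fact[OF True] by simp
  have e: "2*m - 2*i = 2*(m-i)" by simp
  have e2: "2*m+2*i = 2*(m+i)" by simp
  have f4: "(4::real)^k = 2^k*2^k" for k by (metis mult_2 power_add power_mult numeral_Bit0 power2_eq_square power_mult_distrib)
  show ?thesis using True unfolding bet_def pm c e e2 poch_half
    by (simp add: field_simps power_add power_mult f4 power2_eq_square)
qed



lemma bet_gen: "bet m i = (if i \<le> m then 4^i/4^m * fact(2*(m-i))/(fact(m-i))^2 * fact(m+i)/(fact m * fact i) else 0)"
  by (simp add: bet_def)

lemma bet_rec3:
  "real (Suc (Suc (j+n))) * bet (Suc (Suc (j+n))) (Suc j) = 2*real (Suc (j+n) + Suc j)*bet (Suc (j+n)) j + (real (Suc (j+n))+1/2-real (Suc j))*bet (Suc (j+n)) (Suc j)"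
proof -
  define A where "A = (fact (2*n)::real)"
  define B where "B = (fact n::real)"
  define C where "C = (fact (Suc (j+n))::real)"
  define D where "D = (fact j::real)"
  define E where "E = (fact (Suc (2*j+n))::real)"
  define Q where "Q = (4::real)^j / 4^(j+n)"
  have pos: "A > 0" "B > 0" "C > 0" "D > 0" "E > 0" "Q > 0" unfolding A_def B_def C_def D_def E_def Q_def by auto
  have F: "fact (Suc (Suc (2*j+n))) = (2*real j+real n+2)*E"
     "fact (Suc (Suc (Suc (2*j+n)))) = (2*real j+real n+3)*(2*real j+real n+2)*E"
     "fact (Suc (Suc (j+n))) = (real j+real n+2)*C"
     "fact (Suc (Suc (2*n))) = (2*real n+2)*(2*real n+1)*A"
     "fact (Suc n) = (real n+1)*B" "fact (Suc j) = (real j+1)*D"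
     "(4::real)^Suc j / 4^Suc (j+n) = Q" "(4::real)^Suc j / 4^Suc (Suc (j+n)) = Q/4"
     "(4::real)^j / 4^Suc (j+n) = Q/4"
     unfolding A_def B_def C_def D_def E_def Q_def by (simp_all add: algebra_simps)
  have nz: "real j + real n + 2 \<noteq> 0" "real n + 1 \<noteq> 0" "real j + 1 \<noteq> 0" "2*real j + real n + 2 \<noteq> 0" by linarith+
  have b0: "bet (Suc (j+n)) (Suc j) = Q * A/B^2 * ((2*real j+real n+2)*E)/(C*((real j+1)*D))"
  proof -
    have e: "Suc (j+n) - Suc j = n" "Suc (j+n) + Suc j = Suc (Suc (2*j+n))" by auto
    show ?thesis unfolding bet_gen e by (simp del: fact_Suc add: F A_def[symmetric] B_def[symmetric] C_def[symmetric] mult.assoc) (simp add: Q_def field_simps)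
  qed
  have b1: "bet (Suc (Suc (j+n))) (Suc j) = Q/4 * ((2*real n+2)*(2*real n+1)*A)/((real n+1)*B)^2 * ((2*real j+real n+3)*(2*real j+real n+2)*E)/((real j+real n+2)*C*((real j+1)*D))"
  proof -
    have e: "Suc (Suc (j+n)) - Suc j = Suc n" "Suc (Suc (j+n)) + Suc j = Suc (Suc (Suc (2*j+n)))" "2 * Suc n = Suc (Suc (2*n))" by auto
    show ?thesis unfolding bet_gen e by (simp del: fact_Suc add: F mult.assoc) (simp add: Q_def field_simps nz)
  qed
  have b2: "bet (Suc (j+n)) j = Q/4 * ((2*real n+2)*(2*real n+1)*A)/((real n+1)*B)^2 * E/(C*D)"
  proof -
    have e: "Suc (j+n) - j = Suc n" "Suc (j+n) + j = Suc (2*j+n)" "2 * Suc n = Suc (Suc (2*n))" by auto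
    show ?thesis unfolding bet_gen e by (simp del: fact_Suc add: F E_def[symmetric] C_def[symmetric] D_def[symmetric] mult.assoc) (simp add: Q_def field_simps nz)
  qed
  define x where "x = real j"
  define y where "y = real n"
  define W where "W = Q*A*E/(B^2*C*D)"
  have x0: "x \<ge> 0" "y \<ge> 0" unfolding x_def y_def by auto
  have c0: "bet (Suc (j+n)) (Suc j) = W * ((2*x+y+2)/(x+1))"
    unfolding b0 W_def x_def y_def using pos nz by (simp add: field_simps)
  have c1: "bet (Suc (Suc (j+n))) (Suc j) = W * ((2*y+2)*(2*y+1)*(2*x+y+3)*(2*x+y+2)/(4*(y+1)^2*(x+y+2)*(x+1)))"
    unfolding b1 W_def x_def y_def using pos nz by (simp add: field_simps power2_eq_square)
  have c2: "bet (Suc (j+n)) j = W * ((2*y+2)*(2*y+1)/(4*(y+1)^2))"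
    unfolding b2 W_def x_def y_def using pos nz by (simp add: field_simps power2_eq_square)
  have key: "(x+y+2)*((2*y+2)*(2*y+1)*(2*x+y+3)*(2*x+y+2)/(4*(y+1)^2*(x+y+2)*(x+1))) = 2*(2*x+y+2)*((2*y+2)*(2*y+1)/(4*(y+1)^2)) + (y+1/2)*((2*x+y+2)/(x+1))"
  proof -
    have n: "x+1 \<noteq> 0" "y+1 \<noteq> 0" "x+y+2 \<noteq> 0" using x0 by linarith+
    show ?thesis using n by (simp add: divide_simps power2_eq_square) (simp add: algebra_simps)
  qed
  have r: "real (Suc (Suc (j+n))) = x+y+2" "real (Suc (j+n) + Suc j) = 2*x+y+2" "real (Suc (j+n))+1/2-real (Suc j) = y+1/2"
    unfolding x_def y_def by auto
  show ?thesis unfolding c0 c1 c2 r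
    by (metis (no_types, lifting) key mult.left_commute distrib_left mult.assoc)
qed


lemma bet_rec0: "real (Suc m) * bet (Suc m) 0 = (real m + 1/2) * bet m 0"
proof -
  define A where "A = (fact (2*m)::real)"
  define B where "B = (fact m::real)"
  have p: "A > 0" "B > 0" unfolding A_def B_def by auto
  have F: "fact (2 * Suc m) = (2*real m+2)*(2*real m+1)*A" "fact (Suc m) = (real m+1)*B"
    unfolding A_def B_def by (simp_all add: algebra_simps)
  have b0: "bet m 0 = A/(4^m*B^2)" unfolding bet_gen A_def B_def by (simp add: power2_eq_square)
  have "bet (Suc m) 0 = 4^0/4^(Suc m) * fact(2*Suc m)/(fact(Suc m))^2 * fact(Suc m)/(fact (Suc m) * fact 0)"
    unfolding bet_gen by (simp only: if_True le0 diff_zero add_0_right)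
  also have "\<dots> = ((2*real m+2)*(2*real m+1)*A)/(4*4^m*((real m+1)*B)^2)"
    unfolding F using p by (simp add: divide_simps)
  finally have b1: "bet (Suc m) 0 = ((2*real m+2)*(2*real m+1)*A)/(4*4^m*((real m+1)*B)^2)" .
  have n: "real m + 1 \<noteq> 0" by linarith
  show ?thesis unfolding b0 b1 using p n by (simp add: divide_simps power2_eq_square) (simp add: algebra_simps)
qed

lemma bet_recm: "real (Suc m) * bet (Suc m) (Suc m) = 2*real (m + Suc m) * bet m m"
proof -
  define A where "A = (fact (2*m)::real)"
  define B where "B = (fact m::real)"
  have p: "A > 0" "B > 0" unfolding A_def B_def by auto
  have e: "Suc m + Suc m = Suc (Suc (2*m))" "m + m = 2*m" by simp_all
  have F: "fact (Suc m + Suc m) = (2*real m+2)*(2*real m+1)*A" "fact (Suc m) = (real m+1)*B"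
    unfolding A_def B_def e by (simp_all add: algebra_simps)
  have "bet m m = 4^m/4^m * fact(2*(m-m))/(fact(m-m))^2 * fact(m+m)/(fact m * fact m)"
    unfolding bet_gen by (simp only: if_True order_refl)
  also have "\<dots> = A/(B^2)" unfolding A_def B_def e by (simp add: power2_eq_square)
  finally have b0: "bet m m = A/(B^2)" .
  have "bet (Suc m) (Suc m) = 4^Suc m/4^Suc m * fact(2*(Suc m - Suc m))/(fact(Suc m - Suc m))^2 * fact(Suc m + Suc m)/(fact (Suc m) * fact (Suc m))"
    unfolding bet_gen by (simp only: if_True order_refl)
  also have "\<dots> = ((2*real m+2)*(2*real m+1)*A)/(((real m+1)*B)^2)"
    unfolding F using p by (simp add: divide_simps power2_eq_square)
  finally have b1: "bet (Suc m) (Suc m) = ((2*real m+2)*(2*real m+1)*A)/(((real m+1)*B)^2)" .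
  have n: "real m + 1 \<noteq> 0" by linarith
  show ?thesis unfolding b0 b1 using p n by (simp add: divide_simps power2_eq_square) (simp add: algebra_simps)
qed

lemma bet_rec:
  assumes "i \<le> m+1"
  shows "real (m+1) * bet (m+1) i = (if i=0 then 0 else 2*real (m+i)*bet m (i-1)) + (real m+1/2-real i)*bet m i"
proof (cases "i = 0")
  case True then show ?thesis using bet_rec0[of m] by simp
next
  case False
  then obtain j where j: "i = Suc j" by (metis not0_implies_Suc)
  show ?thesis
  proof (cases "i = m+1")
    case True
    then have "j = m" using j by simp
    then show ?thesis using bet_recm[of m] j by (simp add: bet_def)
  next
    case False
    then have "i \<le> m" using assms by simp
    then obtain n where n: "m = Suc j + n" using j le_Suc_ex by blast
    have e: "m + 1 = Suc (Suc (j+n))" "m = Suc (j+n)" "i - 1 = j" using n j by simp_all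
    show ?thesis unfolding e j using bet_rec3[of j n] by simp
  qed
qed



definition Pb :: "nat \<Rightarrow> real \<Rightarrow> real" where "Pb m t = (\<Sum>i=0..m. bet m i * t^i)"
definition Pd :: "nat \<Rightarrow> real \<Rightarrow> real" where "Pd m t = (\<Sum>i=0..m. bet m i * real i * t^(i-1))"

lemma Pb_rec: "real (m+1) * Pb (m+1) t = t*(4*real m+3)*Pb m t + t*(2*t-1)*Pd m t - (t-1/2)*(2*real m+1)*Pb m t"
proof -
  have R: "t*(4*real m+3)*Pb m t + t*(2*t-1)*Pd m t - (t-1/2)*(2*real m+1)*Pb m t
      = (\<Sum>i=0..m. 2*real (m+i+1)*bet m i*t^(i+1) + (real m+1/2-real i)*bet m i*t^i)"
    unfolding Pb_def Pd_def sum_distrib_left sum_subtractf[symmetric] sum.distrib[symmetric]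
  proof (rule sum.cong[OF refl])
    fix i assume "i \<in> {0..m}"
    show "t * (4 * real m + 3) * (bet m i * t ^ i) + t * (2 * t - 1) * (bet m i * real i * t ^ (i - 1)) -
          (t - 1 / 2) * (2 * real m + 1) * (bet m i * t ^ i) =
          2 * real (m + i + 1) * bet m i * t ^ (i + 1) + (real m + 1 / 2 - real i) * bet m i * t ^ i"
    proof (cases i)
      case 0 then show ?thesis by (simp add: algebra_simps)
    next
      case (Suc k)
      have "t^i = t * t^k" "t^(i+1) = t*t*t^k" "t^(i-1) = t^k" using Suc by simp_all
      then show ?thesis using Suc by (simp add: algebra_simps)
    qed
  qed
  have L: "real (m+1) * Pb (m+1) t = (\<Sum>i=0..Suc m. (if i=0 then 0 else 2*real (m+i)*bet m (i-1)) * t^i)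
       + (\<Sum>i=0..Suc m. (real m+1/2-real i)*bet m i * t^i)"
  proof -
    have "real (m+1) * Pb (m+1) t = (\<Sum>i=0..Suc m. real (m+1) * (bet (m+1) i * t^i))"
      unfolding Pb_def sum_distrib_left by simp
    also have "\<dots> = (\<Sum>i=0..Suc m. (if i=0 then 0 else 2*real (m+i)*bet m (i-1)) * t^i + (real m+1/2-real i)*bet m i * t^i)"
    proof (rule sum.cong[OF refl])
      fix i assume "i \<in> {0..Suc m}"
      then have h: "real (m+1) * bet (m+1) i = (if i=0 then 0 else 2*real (m+i)*bet m (i-1)) + (real m+1/2-real i)*bet m i"
        using bet_rec[of i m] by simp
      show "real (m+1) * (bet (m+1) i * t^i) = (if i=0 then 0 else 2*real (m+i)*bet m (i-1)) * t^i + (real m+1/2-real i)*bet m i * t^i"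
        by (simp only: mult.assoc[symmetric] h) (simp add: algebra_simps)
    qed
    also have "\<dots> = (\<Sum>i=0..Suc m. (if i=0 then 0 else 2*real (m+i)*bet m (i-1)) * t^i)
       + (\<Sum>i=0..Suc m. (real m+1/2-real i)*bet m i * t^i)" by (rule sum.distrib)
    finally show ?thesis .
  qed
  have L1: "(\<Sum>i=0..Suc m. (if i=0 then 0 else 2*real (m+i)*bet m (i-1)) * t^i) = (\<Sum>i=0..m. 2*real (m+i+1)*bet m i*t^(i+1))"
    by (subst sum.atLeast0_atMost_Suc_shift) simp
  have L2: "(\<Sum>i=0..Suc m. (real m+1/2-real i)*bet m i * t^i) = (\<Sum>i=0..m. (real m+1/2-real i)*bet m i * t^i)"
    by (subst sum.atLeast0_atMost_Suc) (simp add: bet_def)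
  show ?thesis unfolding L L1 L2 R sum.distrib ..
qed



lemma P_eq: "P m a = Pb m ((a+1)/2)"
  unfolding P_def Pb_def sum_distrib_left
proof (rule sum.cong[OF refl])
  fix i assume "i \<in> {0..m}"
  show "pochhammer (1 / 2) m / (fact (2 * m))\<^sup>2 * (fact (2 * m - 2 * i) * fact (2 * m + 2 * i) /
          (pochhammer (real m + 1 / 2) i * fact (m - i)) * real (m choose i) * ((a + 1) / 2) ^ i) =
        bet m i * ((a + 1) / 2) ^ i"
    using alpha_eq[of m i] by (simp only: mult.assoc[symmetric])
qed

lemma d_eq: "d j m = (\<Sum>i=j..m. bet m i / 2^i * real (i choose j))"
  unfolding d_def sum_distrib_left
proof (rule sum.cong[OF refl])
  fix i assume "i \<in> {j..m}"
  show "pochhammer (1 / 2) m / (fact (2 * m))\<^sup>2 * (fact (2 * m - 2 * i) * fact (2 * m + 2 * i) /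
          (pochhammer (real m + 1 / 2) i * fact (m - i) * 2 ^ i) * real (m choose i) * real (i choose j)) =
        bet m i / 2 ^ i * real (i choose j)"
  proof -
    have e: "c*(X/(Y*z)*ch*cij) = (c*(X/Y*ch))/z*cij" for c X Y z ch cij :: real
      by (simp add: divide_inverse mult_ac)
    show ?thesis unfolding e alpha_eq ..
  qed
qed

lemma P_d: "P m a = (\<Sum>j=0..m. d j m * a^j)"
proof -
  have "P m a = (\<Sum>i=0..m. bet m i / 2^i * (a+1)^i)"
    unfolding P_eq Pb_def by (simp add: power_divide)
  also have "\<dots> = (\<Sum>i=0..m. \<Sum>j=0..m. (if j \<le> i then bet m i / 2^i * real (i choose j) * a^j else 0))"
  proof (rule sum.cong[OF refl])
    fix i assume i: "i \<in> {0..m}"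
    have "(a+1)^i = (\<Sum>j=0..i. real (i choose j) * a^j)"
      using binomial_ring[of a 1 i] by (simp add: atLeast0AtMost)
    also have "\<dots> = (\<Sum>j=0..m. (if j \<le> i then real (i choose j) * a^j else 0))"
      using i by (intro sum.mono_neutral_cong_left) auto
    finally show "bet m i / 2^i * (a+1)^i = (\<Sum>j=0..m. (if j \<le> i then bet m i / 2^i * real (i choose j) * a^j else 0))"
      by (simp add: sum_distrib_left if_distrib mult.assoc cong: if_cong)
  qed
  also have "\<dots> = (\<Sum>j=0..m. \<Sum>i=0..m. (if j \<le> i then bet m i / 2^i * real (i choose j) * a^j else 0))"
    by (rule sum.swap)
  also have "\<dots> = (\<Sum>j=0..m. d j m * a^j)"
  proof (rule sum.cong[OF refl])
    fix j assume j: "j \<in> {0..m}"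
    have "(\<Sum>i=0..m. (if j \<le> i then bet m i / 2^i * real (i choose j) * a^j else 0))
        = (\<Sum>i=j..m. bet m i / 2^i * real (i choose j) * a^j)"
      using j by (intro sum.mono_neutral_cong_right) auto
    then show "(\<Sum>i=0..m. (if j \<le> i then bet m i / 2^i * real (i choose j) * a^j else 0)) = d j m * a^j"
      by (simp add: d_eq sum_distrib_right)
  qed
  finally show ?thesis .
qed



definition G :: "nat \<Rightarrow> real \<Rightarrow> real" where
  "G m a = (pi/2) * Pb m ((a+1)/2) / (2*(a+1)) powr (real m + 1/2)"
definition G' :: "nat \<Rightarrow> real \<Rightarrow> real" where
  "G' m a = (pi/2) * (Pd m ((a+1)/2)/2 - Pb m ((a+1)/2)*(2*real m+1)/(2*(a+1))) / (2*(a+1)) powr (real m + 1/2)"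

lemma Pb_deriv: "(Pb m has_real_derivative Pd m t) (at t)"
  unfolding Pb_def[abs_def] Pd_def
  by (auto intro!: derivative_eq_intros DERIV_sum simp: mult.assoc)

lemma G_deriv: assumes "a > -1" shows "(G m has_real_derivative G' m a) (at a)"
proof -
  have c: "2*(a+1) > 0" using assms by simp
  have d1: "((\<lambda>a. Pb m ((a+1)/2)) has_real_derivative Pd m ((a+1)/2) * (1/2)) (at a)"
    by (rule DERIV_chain2[OF Pb_deriv]) (auto intro!: derivative_eq_intros)
  have d2: "((\<lambda>a. (2*(a+1)) powr (real m + 1/2)) has_real_derivative
      (real m + 1/2) * (2*(a+1)) powr (real m + 1/2 - 1) * 2) (at a)"
    using c by (auto intro!: derivative_eq_intros)
  have S: "(2*(a+1)) powr (real m + 1/2 - 1) = (2*(a+1)) powr (real m + 1/2) / (2*(a+1))"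
    using powr_diff[of "2*(a+1)" "real m + 1/2" 1] c by simp
  have Sp: "(2*(a+1)) powr (real m + 1/2) > 0" using c by simp
  have "((\<lambda>a. (pi/2) * Pb m ((a+1)/2) / (2*(a+1)) powr (real m + 1/2)) has_real_derivative
     ((pi/2) * (Pd m ((a+1)/2) * (1/2)) * (2*(a+1)) powr (real m + 1/2) - (pi/2) * Pb m ((a+1)/2) *
       ((real m + 1/2) * (2*(a+1)) powr (real m + 1/2 - 1) * 2)) / ((2*(a+1)) powr (real m + 1/2) * (2*(a+1)) powr (real m + 1/2))) (at a)"
    by (intro DERIV_divide DERIV_cmult d1 d2) (use Sp in simp)
  moreover have "((pi/2) * (Pd m ((a+1)/2) * (1/2)) * (2*(a+1)) powr (real m + 1/2) - (pi/2) * Pb m ((a+1)/2) *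
       ((real m + 1/2) * (2*(a+1)) powr (real m + 1/2 - 1) * 2)) / ((2*(a+1)) powr (real m + 1/2) * (2*(a+1)) powr (real m + 1/2)) = G' m a"
    using Sp c unfolding G'_def S by (simp add: divide_simps) (simp add: algebra_simps power2_eq_square)
  ultimately show ?thesis unfolding G_def[abs_def] by simp
qed

lemma G_rec: assumes "a > -1"
  shows "4*real (m+1)*G (m+1) a = (4*real m+3)*G m a + 2*a*G' m a"
proof -
  define c where "c = 2*(a+1)"
  define t where "t = (a+1)/2"
  define S where "S = c powr (real m + 1/2)"
  have c: "c > 0" using assms by (simp add: c_def)
  have Sp: "S > 0" unfolding S_def using c by simp
  have S1: "c powr (real (m+1) + 1/2) = S * c" unfolding S_def using c powr_add[of c "real m+1/2" 1]
    by (simp add: algebra_simps)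
  have ta: "a = 2*t - 1" "c = 4*t" unfolding t_def c_def by (simp_all add: field_simps)
  have R: "real (m+1) * Pb (m+1) t = t*(4*real m+3)*Pb m t + t*(2*t-1)*Pd m t - (t-1/2)*(2*real m+1)*Pb m t"
    by (rule Pb_rec)
  have g1: "G (m+1) a = (pi/2) * Pb (m+1) t / (S*c)" unfolding G_def S1[unfolded c_def] t_def[symmetric] c_def ..
  have g2: "G m a = (pi/2) * Pb m t / S" unfolding G_def S_def c_def t_def ..
  have g3: "G' m a = (pi/2) * (Pd m t/2 - Pb m t*(2*real m+1)/c) / S" unfolding G'_def S_def c_def t_def ..
  have tp: "t > 0" using c ta by simp
  have R': "Pb (m+1) t = (t*(4*real m+3)*Pb m t + t*(2*t-1)*Pd m t - (t-1/2)*(2*real m+1)*Pb m t) / real (m+1)"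
    using R by (simp add: field_simps)
  show ?thesis unfolding g1 g2 g3 R'
    using Sp tp unfolding ta by (simp add: divide_simps) (simp add: algebra_simps)
qed



definition R :: "real \<Rightarrow> real \<Rightarrow> real" where "R a t = t^4 + 2*a*t^2*(1-t)^2 + (1-t)^4"
definition h :: "nat \<Rightarrow> real \<Rightarrow> real \<Rightarrow> real" where "h m a t = (1-t)^(4*m+2) / R a t^(m+1)"
definition k :: "nat \<Rightarrow> real \<Rightarrow> real \<Rightarrow> real" where "k m a t = t^2*(1-t)^(4*m+4) / R a t^(m+2)"
definition NN :: "nat \<Rightarrow> real \<Rightarrow> real" where "NN m a = integral {0..1} (h m a)"

lemma R_alt: "R a t = (2*t-1)^2 + 2*(a+1)*t^2*(1-t)^2"
  unfolding R_def by (simp add: algebra_simps power2_eq_square power4_eq_xxxx)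

lemma R_pos: assumes "a > -1" shows "R a t > 0"
proof (cases "t = 1/2")
  case True then show ?thesis using assms unfolding R_alt True by (simp add: power2_eq_square)
next
  case False
  then have "(2*t-1)^2 > 0" by simp
  moreover have "2*(a+1)*t^2*(1-t)^2 \<ge> 0" using assms by simp
  ultimately show ?thesis unfolding R_alt by linarith
qed

lemma R_cont[continuous_intros]: "continuous_on S f \<Longrightarrow> continuous_on S g \<Longrightarrow> continuous_on S (\<lambda>x. R (f x) (g x))"
  unfolding R_def by (intro continuous_intros)

lemma R_deriv_a: "((\<lambda>a. R a t) has_real_derivative 2*t^2*(1-t)^2) (at a)"
  unfolding R_def by (auto intro!: derivative_eq_intros)

lemma R_nz: "a > -1 \<Longrightarrow> R a t \<noteq> 0" using R_pos[of a t] by simp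

lemma h_cont: "a > -1 \<Longrightarrow> continuous_on S (h m a)"
  unfolding h_def by (intro continuous_intros) (auto simp: R_nz)

lemma h_deriv_a: assumes "a > -1" shows "((\<lambda>a. h m a t) has_real_derivative (-2*real (m+1)) * k m a t) (at a)"
proof -
  note DERIV_pow' = DERIV_power[where n="m+1"]
  have W: "R a t > 0" using R_pos assms by blast
  have "((\<lambda>a. h m a t) has_real_derivative (0 * R a t^(m+1) - (1-t)^(4*m+2) * (real (m+1) * (2*t^2*(1-t)^2 * R a t^(m+1 - Suc 0)))) / (R a t^(m+1) * R a t^(m+1))) (at a)"
    unfolding h_def
    by (intro DERIV_divide DERIV_const DERIV_pow' R_deriv_a) (use W in auto)
  moreover have "(0 * R a t^(m+1) - (1-t)^(4*m+2) * (real (m+1) * (2*t^2*(1-t)^2 * R a t^(m+1 - Suc 0)))) / (R a t^(m+1) * R a t^(m+1)) = (-2*real (m+1)) * k m a t"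
  proof -
    have n: "4*m+4 = (4*m+2)+2" by simp
    have e: "(1-t)^(4*m+4) = (1-t)^(4*m+2)*(1-t)^2" by (subst n, subst power_add) (rule refl)
    show ?thesis unfolding k_def e using W by (simp add: divide_simps power_add power_Suc) (simp add: algebra_simps)
  qed
  ultimately show ?thesis by simp
qed



definition R' :: "real \<Rightarrow> real \<Rightarrow> real" where "R' a t = 4*t^3 + 2*a*(2*t*(1-t)^2 - 2*t^2*(1-t)) - 4*(1-t)^3"

lemma R_deriv_t: "((\<lambda>t. R a t) has_real_derivative R' a t) (at t)"
  unfolding R_def[abs_def] R'_def by (auto intro!: derivative_eq_intros simp: algebra_simps)

lemma P1: "4*R a t - t*R' a t = 4*a*t^2*(1-t) + 4*(1-t)^3"
  unfolding R_def R'_def by (simp add: algebra_simps power2_eq_square power3_eq_cube power4_eq_xxxx)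

lemma Phi_deriv: assumes "a > -1"
  shows "((\<lambda>t. t*(1-t)^(4*m+3)/R a t^(m+1)) has_real_derivative
     (h m a t - 4*real (m+1)*(h m a t - a*k m a t - h (m+1) a t))) (at t)"
proof -
  have W: "R a t \<noteq> 0" using R_nz assms by blast
  define s where "s = 1 - t"
  define u where "u = (1-t)^(4*m+2)"
  define V where "V = R a t ^ m"
  define W where "W = R a t"
  define D where "D = R' a t"
  have V0: "V \<noteq> 0" "W \<noteq> 0" using W unfolding V_def W_def by auto
  have d: "((\<lambda>t. t*(1-t)^(4*m+3)/R a t^(m+1)) has_real_derivative
     ((1*(1-t)^(4*m+3) + (real (4*m+3)*((0-1) * (1-t)^(4*m+3-Suc 0)))*t) * R a t^(m+1)
       - t*(1-t)^(4*m+3) * (real (m+1)*(R' a t * R a t^(m+1-Suc 0)))) / (R a t^(m+1)*R a t^(m+1))) (at t)"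
  proof -
    have d0: "((\<lambda>t. 1 - t) has_real_derivative (0-1)) (at t)" by (rule DERIV_diff[OF DERIV_const DERIV_ident])
    have d1: "((\<lambda>t. (1 - t)^(4*m+3)) has_real_derivative real (4*m+3) * ((0-1) * (1-t)^(4*m+3-Suc 0))) (at t)"
      by (rule DERIV_power[OF d0])
    have d2: "((\<lambda>t. t * (1 - t)^(4*m+3)) has_real_derivative (1 * (1-t)^(4*m+3) + (real (4*m+3) * ((0-1) * (1-t)^(4*m+3-Suc 0))) * t)) (at t)"
      by (rule DERIV_mult[OF DERIV_ident d1])
    have d3: "((\<lambda>t. R a t^(m+1)) has_real_derivative real (m+1)*(R' a t * R a t^(m+1-Suc 0))) (at t)"
      by (rule DERIV_power[OF R_deriv_t])
    show ?thesis by (rule DERIV_divide[OF d2 d3]) (use W in simp)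
  qed
  have ex: "4*m+3 = (4*m+2)+1" "4*m+4 = (4*m+2)+2" "4*(m+1)+2 = (4*m+2)+4" "m+2 = m+1+1" by simp_all
  have e1: "(1-t)^(4*m+3) = u * s" "(1-t)^(4*m+3-Suc 0) = u" "R a t^(m+1) = W*V" "R a t^(m+1-Suc 0) = V"
    "R a t^(m+2) = W*W*V" "(1-t)^(4*m+4) = u * s^2" "(1-t)^(4*(m+1)+2) = u * s^4" "R a t^(m+1+1) = W*W*V" "(1-t)^(4*m+2) = u"
    unfolding ex unfolding power_add u_def s_def V_def W_def by (simp_all add: power2_eq_square)
  have P: "4*W - t*D = 4*a*t^2 * s + 4 * s^3" unfolding W_def D_def s_def by (rule P1)
  have st: "s = 1 - t" by (simp add: s_def)
  have "((1*(1-t)^(4*m+3) + (real (4*m+3)*((0-1) * (1-t)^(4*m+3-Suc 0)))*t) * R a t^(m+1)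
       - t*(1-t)^(4*m+3) * (real (m+1)*(R' a t * R a t^(m+1-Suc 0)))) / (R a t^(m+1)*R a t^(m+1))
      = (h m a t - 4*real (m+1)*(h m a t - a*k m a t - h (m+1) a t))"
  proof -
    have tD: "t*D = 4*W - 4*a*t^2 * s - 4 * s^3" using P by linarith
    have "t * s * (real m+1) * D = s * (real m+1) * (t*D)" by (simp add: algebra_simps)
    also have "\<dots> = s * (real m+1) * (4*W - 4*a*t^2 * s - 4 * s^3)" unfolding tD ..
    finally have c1: "t * s * (real m+1) * D = s * (real m+1) * (4*W - 4*a*t^2 * s - 4 * s^3)" .
    have core: "(s - t*(4*real m+3))*W - t * s *(real m+1)*D = W - 4*(real m+1)*(W - a*t^2 * s^2 - s^4)"
      unfolding c1 unfolding st by (simp add: algebra_simps power2_eq_square power3_eq_cube power4_eq_xxxx)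
    then have core2: "u*V*((s - t*(4*real m+3))*W - t * s *(real m+1)*D) = u*V*(W - 4*(real m+1)*(W - a*t^2 * s^2 - s^4))"
      by simp
    show ?thesis unfolding h_def k_def e1 D_def[symmetric] using V0 apply (simp add: divide_simps)
      apply (insert core) apply algebra done
  qed
  with d show ?thesis by simp
qed



lemma k_cont: "a > -1 \<Longrightarrow> continuous_on S (k m a)"
  unfolding k_def by (intro continuous_intros) (auto simp: R_nz)

lemma h_int: "a > -1 \<Longrightarrow> (h m a has_integral NN m a) {0..1}"
  unfolding NN_def by (intro integrable_integral integrable_continuous_interval h_cont)

lemma k_int: "a > -1 \<Longrightarrow> (k m a has_integral integral {0..1} (k m a)) {0..1}"
  by (intro integrable_integral integrable_continuous_interval k_cont)

lemma IBP: assumes "a > -1"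
  shows "NN m a - 4*real (m+1)*(NN m a - a*integral {0..1} (k m a) - NN (m+1) a) = 0"
proof -
  define \<Phi> where "\<Phi> = (\<lambda>t. t*(1-t)^(4*m+3)/R a t^(m+1))"
  have "((\<lambda>t. h m a t - 4*real (m+1)*(h m a t - a*k m a t - h (m+1) a t)) has_integral (\<Phi> 1 - \<Phi> 0)) {0..1}"
  proof (rule fundamental_theorem_of_calculus)
    fix t :: real assume "t \<in> {0..1}"
    show "(\<Phi> has_vector_derivative (h m a t - 4*real (m+1)*(h m a t - a*k m a t - h (m+1) a t))) (at t within {0..1})"
      unfolding \<Phi>_def using Phi_deriv[OF assms, of m t]
      by (simp add: has_real_derivative_iff_has_vector_derivative has_vector_derivative_at_within)
  qed simp
  then have I1: "((\<lambda>t. h m a t - 4*real (m+1)*(h m a t - a*k m a t - h (m+1) a t)) has_integral 0) {0..1}"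
    unfolding \<Phi>_def by (simp add: power_0_left)
  have I2: "((\<lambda>t. h m a t - 4*real (m+1)*(h m a t - a*k m a t - h (m+1) a t)) has_integral
      (NN m a - 4*real (m+1)*(NN m a - a*integral {0..1} (k m a) - NN (m+1) a))) {0..1}"
    by (intro has_integral_diff has_integral_mult_right h_int k_int assms)
  show ?thesis using has_integral_unique[OF I2 I1] .
qed

lemma NN_deriv: assumes "a > -1"
  shows "(NN m has_real_derivative (-2*real (m+1)) * integral {0..1} (k m a)) (at a)"
proof -
  have "((\<lambda>x. integral (cbox 0 1) (h m x)) has_field_derivative integral (cbox 0 1) (\<lambda>t. (-2*real (m+1)) * k m a t)) (at a within {-1<..})"
  proof (rule leibniz_rule_field_derivative)
    fix x t :: real assume "x \<in> {-1<..}" "t \<in> cbox 0 1"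
    then show "((\<lambda>x. h m x t) has_field_derivative (-2*real (m+1)) * k m x t) (at x within {-1<..})"
      using h_deriv_a[of x m t] by (simp add: has_field_derivative_at_within)
  next
    fix x :: real assume "x \<in> {-1<..}"
    then show "h m x integrable_on cbox 0 1"
      by (intro integrable_continuous h_cont) simp
  next
    have "\<forall>p\<in>{-1<..} \<times> cbox 0 1. R (fst p) (snd p) \<noteq> 0" by (auto simp: R_nz)
    then show "continuous_on ({-1<..} \<times> cbox 0 1) (\<lambda>(x, t). (-2*real (m+1)) * k m x t)"
      unfolding k_def split_beta by (intro continuous_intros) auto
  qed (use assms in auto)
  moreover have "integral (cbox 0 1) (\<lambda>t. (-2*real (m+1)) * k m a t) = (-2*real (m+1)) * integral {0..1} (k m a)"
    by simp
  moreover have "at a within {-1<..} = at a" using assms by (intro at_within_open) auto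
  ultimately show ?thesis unfolding NN_def[abs_def] by simp
qed



lemma P2: "4*R a t + (1-2*t)*R' a t = 2*(2*(a+1))*t*(1-t)*(t^2+(1-t)^2)"
  unfolding R_def R'_def by (simp add: algebra_simps power2_eq_square power3_eq_cube power4_eq_xxxx)

lemma R_sym: "R a (1-t) = R a t"
  unfolding R_def by (simp add: algebra_simps)

lemma R_gap: "R a t - (1-2*t)^2 = 2*(a+1)*t^2*(1-t)^2"
  unfolding R_alt by (simp add: power2_eq_square algebra_simps)

lemma base_deriv:
  assumes a: "a > -1" and t: "0 < t" "t < 1"
  shows "((\<lambda>t. arccos ((1-2*t)/sqrt (R a t)) / sqrt (2*(a+1))) has_real_derivative (t^2+(1-t)^2)/R a t) (at t)"
proof -
  define c where "c = 2*(a+1)"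
  define r where "r = sqrt c"
  define q where "q = sqrt (R a t)"
  define s where "s = 1 - t"
  define W where "W = R a t"
  define D where "D = R' a t"
  have c0: "c > 0" using a by (simp add: c_def)
  have r0: "r > 0" "r^2 = c" using c0 by (simp_all add: r_def)
  have W0: "W > 0" using R_pos[OF a] by (simp add: W_def)
  have q0: "q > 0" "q^2 = W" using W0 by (simp_all add: q_def W_def)
  have s0: "s > 0" using t by (simp add: s_def)
  have gap: "W - (1-2*t)^2 = c*t^2* s^2" unfolding W_def c_def s_def by (rule R_gap)
  have dq: "((\<lambda>t. sqrt (R a t)) has_real_derivative inverse (sqrt (R a t)) / 2 * R' a t) (at t)"
    by (rule DERIV_chain2[OF DERIV_real_sqrt R_deriv_t]) (use R_pos[OF a] in simp)
  have dw: "((\<lambda>t. (1-2*t)/sqrt (R a t)) has_real_derivative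
      ((0 - 2*1) * sqrt (R a t) - (1-2*t) * (inverse (sqrt (R a t)) / 2 * R' a t)) / (sqrt (R a t) * sqrt (R a t))) (at t)"
    by (rule DERIV_divide[OF DERIV_diff[OF DERIV_const DERIV_cmult[OF DERIV_ident]] dq]) (simp add: R_nz[OF a])
  have pos: "c*t^2* s^2 > 0" using c0 t s0 by simp
  have lt: "\<bar>1-2*t\<bar>^2 < W" using gap pos by simp
  have lt2: "\<bar>1-2*t\<bar> < q" unfolding q_def W_def[symmetric] by (rule real_less_rsqrt[OF lt])
  have lt3: "-q < 1-2*t" "1-2*t < q" using lt2 by linarith+
  have w1: "-1 < (1-2*t)/q" "(1-2*t)/q < 1" using lt3 q0(1) by (simp_all add: divide_simps)
  have dF: "((\<lambda>t. arccos ((1-2*t)/sqrt (R a t)) / sqrt (2*(a+1))) has_real_derivative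
      (inverse (- sqrt (1 - ((1-2*t)/q)^2)) * (((0 - 2*1) * q - (1-2*t) * (inverse q / 2 * D)) / (q * q))) / r) (at t)"
    unfolding r_def c_def q_def D_def
    by (rule DERIV_cdivide[OF DERIV_chain2[OF DERIV_arccos dw]]) (use w1 in \<open>simp_all add: q_def\<close>)
  have sq: "sqrt (1 - ((1-2*t)/q)^2) = r*t* s/q"
  proof (rule real_sqrt_unique)
    show "(r*t* s/q)^2 = 1 - ((1-2*t)/q)^2"
    proof -
      have "(r*t* s/q)^2 = c*t^2* s^2/W" using r0 q0 by (simp add: power_divide power_mult_distrib)
      also have "\<dots> = (W - (1-2*t)^2)/W" unfolding gap ..
      also have "\<dots> = 1 - ((1-2*t)/q)^2" using W0 by (simp only: power_divide q0(2)) (simp add: diff_divide_distrib)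
      finally show ?thesis .
    qed
    show "0 \<le> r*t* s/q" using r0 t s0 q0 by simp
  qed
  have P: "4*W + (1-2*t)*D = 2*c*t* s*(t^2+s^2)" unfolding W_def D_def c_def s_def by (rule P2)
  have "(inverse (- sqrt (1 - ((1-2*t)/q)^2)) * (((0 - 2*1) * q - (1-2*t) * (inverse q / 2 * D)) / (q * q))) / r
      = (4*q^2 + (1-2*t)*D) / (2*r^2*t* s*q^2)"
    unfolding sq using r0 t s0 q0 c0 W0 by (simp add: divide_simps) (simp add: algebra_simps power2_eq_square)
  also have "\<dots> = (t^2+(1-t)^2)/R a t"
    unfolding q0(2) r0(2) P using c0 t s0 W0 by (simp add: divide_simps W_def[symmetric] s_def[symmetric])
  finally show ?thesis using dF by simp
qed



lemma w_bound: assumes "a > -1" shows "-1 \<le> (1-2*t)/sqrt (R a t) \<and> (1-2*t)/sqrt (R a t) \<le> 1"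
proof -
  have W0: "R a t > 0" using R_pos[OF assms] .
  have nn: "2*(a+1)*t^2*(1-t)^2 \<ge> 0" using assms by simp
  have "\<bar>1-2*t\<bar>^2 \<le> R a t" using R_gap[of a t] nn by simp
  then have "\<bar>1-2*t\<bar> \<le> sqrt (R a t)" by (rule real_le_rsqrt)
  then have "-sqrt (R a t) \<le> 1-2*t" "1-2*t \<le> sqrt (R a t)" by linarith+
  then show ?thesis using W0 by (simp add: divide_simps)
qed

lemma base_FTC: assumes a: "a > -1"
  shows "((\<lambda>t. (t^2+(1-t)^2)/R a t) has_integral pi/sqrt (2*(a+1))) {0..1}"
proof -
  define F where "F = (\<lambda>t. arccos ((1-2*t)/sqrt (R a t)) / sqrt (2*(a+1)))"
  have "((\<lambda>t. (t^2+(1-t)^2)/R a t) has_integral (F 1 - F 0)) {0..1}"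
  proof (rule fundamental_theorem_of_calculus_interior)
    show "continuous_on {0..1} F" unfolding F_def
      using a by (intro continuous_intros) (auto simp: w_bound[OF a] R_nz[OF a])
    fix t :: real assume "t \<in> {0<..<1}"
    then show "(F has_vector_derivative (t^2+(1-t)^2)/R a t) (at t)"
      unfolding F_def using base_deriv[OF a, of t] by (simp add: has_real_derivative_iff_has_vector_derivative)
  qed simp
  moreover have "R a 1 = 1" "R a 0 = 1" by (simp_all add: R_def)
  ultimately show ?thesis by (simp add: F_def)
qed

lemma base_NN: assumes a: "a > -1" shows "NN 0 a = pi / (2* sqrt (2*(a+1)))"
proof -
  define f where "f = (\<lambda>t. t^2 / R a t)"
  have fi: "(f has_integral integral {0..1} f) {0..1}"
    unfolding f_def by (intro integrable_integral integrable_continuous_interval continuous_intros) (auto simp: R_nz[OF a])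
  have "((\<lambda>x. f ((-1) *\<^sub>R x + 1)) has_integral (1 / (\<bar>-1\<bar> ^ DIM(real))) *\<^sub>R integral {0..1} f)
      ((\<lambda>x. (1 / (-1)) *\<^sub>R x + -((1 / (-1)) *\<^sub>R 1)) ` cbox 0 1)"
    by (rule has_integral_affinity) (use fi in auto)
  moreover have "(\<lambda>x. (1 / (-1)) *\<^sub>R x + -((1 / (-1)) *\<^sub>R 1)) ` cbox 0 1 = {0..(1::real)}"
  proof -
    have "(\<lambda>x::real. (1 / (-1)) *\<^sub>R x + -((1 / (-1)) *\<^sub>R 1)) = (\<lambda>x. 1 - x)" by auto
    moreover have "(\<lambda>x::real. 1 - x) ` {0..1} = {0..1}"
      by (auto intro!: image_eqI[where x="1 - _"])
    ultimately show ?thesis by simp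
  qed
  moreover have "(\<lambda>x. f ((-1) *\<^sub>R x + 1)) = h 0 a"
  proof
    fix x :: real
    have "(-1) *\<^sub>R x + 1 = 1 - x" by simp
    then show "f ((-1) *\<^sub>R x + 1) = h 0 a x" unfolding f_def h_def by (simp add: R_sym power2_eq_square)
  qed
  ultimately have "(h 0 a has_integral integral {0..1} f) {0..1}" by simp
  then have e1: "NN 0 a = integral {0..1} f" using h_int[OF a, of 0] by (rule has_integral_unique[symmetric])
  have "((\<lambda>t. h 0 a t + f t) has_integral (NN 0 a + integral {0..1} f)) {0..1}"
    by (intro has_integral_add h_int fi a)
  moreover have "(\<lambda>t. h 0 a t + f t) = (\<lambda>t. (t^2+(1-t)^2)/R a t)"
    unfolding h_def f_def by (auto simp: add_divide_distrib power2_eq_square)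
  ultimately have "NN 0 a + integral {0..1} f = pi/sqrt (2*(a+1))"
    using base_FTC[OF a] by (metis has_integral_unique)
  then show ?thesis unfolding e1[symmetric] by simp
qed



lemma NN_G: "\<forall>a>-1. NN m a = G m a"
proof (induction m)
  case 0
  show ?case
  proof (intro allI impI)
    fix a :: real assume a: "a > -1"
    have "Pb 0 ((a+1)/2) = 1" by (simp add: Pb_def bet_def)
    moreover have "(2*(a+1)) powr (real 0 + 1/2) = sqrt (2*(a+1))" using a by (simp add: powr_half_sqrt)
    ultimately have "G 0 a = (pi/2) / sqrt (2*(a+1))" by (simp add: G_def)
    then show "NN 0 a = G 0 a" using base_NN[OF a] by simp
  qed
next
  case (Suc m)
  show ?case
  proof (intro allI impI)
    fix a :: real assume a: "a > -1"
    define K where "K = integral {0..1} (k m a)"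
    have d1: "(NN m has_real_derivative (-2*real (m+1)) * K) (at a)" unfolding K_def by (rule NN_deriv[OF a])
    have d2: "(G m has_real_derivative (-2*real (m+1)) * K) (at a)"
      by (rule has_field_derivative_transform_within_open[OF d1, of "{-1<..}"]) (use a Suc.IH in auto)
    have gd: "G' m a = (-2*real (m+1)) * K" using DERIV_unique[OF G_deriv[OF a] d2] .
    have ibp: "NN m a - 4*real (m+1)*(NN m a - a*K - NN (m+1) a) = 0" unfolding K_def by (rule IBP[OF a])
    have gr: "4*real (m+1)*G (m+1) a = (4*real m+3)*G m a + 2*a*G' m a" by (rule G_rec[OF a])
    have nm: "NN m a = G m a" using Suc.IH a by auto
    have "4*real (m+1)*NN (m+1) a = (4*real m+3)*NN m a - 4*real (m+1)*(a*K)"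
      using ibp by (simp add: algebra_simps)
    also have "\<dots> = 4*real (m+1)*G (m+1) a" unfolding gr gd nm by (simp add: algebra_simps)
    finally show "NN (Suc m) a = G (Suc m) a" by simp
  qed
qed



lemma Q_pos: assumes "a > -1" shows "(x::real)^4 + 2*a*x^2 + 1 > 0"
proof -
  have e: "x^4 + 2*a*x^2 + 1 = (x^2-1)^2 + 2*(a+1)*x^2" by (simp add: algebra_simps power2_eq_square power4_eq_xxxx)
  show ?thesis
  proof (cases "x = 0")
    case True then show ?thesis by simp
  next
    case False
    then have "2*(a+1)*x^2 > 0" using assms by simp
    then show ?thesis unfolding e by (smt (verit) zero_le_power2)
  qed
qed

lemma fg_eq: assumes a: "a > -1" and t: "t < 1"
  shows "1/((t/(1-t))^4 + 2*a*(t/(1-t))^2 + 1)^(m+1) * (1/(1-t)^2) = h m a t"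
proof -
  define s where "s = 1 - t"
  have s0: "s > 0" using t by (simp add: s_def)
  have "(t/s)^4 + 2*a*(t/s)^2 + 1 = R a t / s^4"
    using s0 unfolding R_def s_def[symmetric] by (simp add: divide_simps) (simp add: algebra_simps)
  then have "1/((t/s)^4 + 2*a*(t/s)^2 + 1)^(m+1) * (1/s^2) = s^(4*(m+1)) / R a t^(m+1) / s^2"
    using s0 by (simp add: power_divide power_mult power_add)
  also have "\<dots> = s^(4*m+2) / R a t^(m+1)"
  proof -
    have n: "4*(m+1) = (4*m+2)+2" by simp
    have "s^(4*(m+1)) = s^(4*m+2) * s^2" by (simp only: n power_add)
    then show ?thesis using s0 by simp
  qed
  finally show ?thesis unfolding h_def s_def .
qed

lemma transport: assumes a: "a > -1"
  shows "((\<lambda>x::real. 1/(x^4+2*a*x^2+1)^(m+1)) has_integral NN m a) {0..}"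
proof -
  define f where "f = (\<lambda>x::real. 1/(x^4+2*a*x^2+1)^(m+1))"
  define g where "g = (\<lambda>t::real. t/(1-t))"
  define g' where "g' = (\<lambda>t::real. 1/(1-t)^2)"
  have fc: "isCont f x" for x unfolding f_def using Q_pos[OF a, of x] by (intro continuous_intros) auto
  have fgh: "f (g t) * g' t = h m a t" if "t < 1" for t
    unfolding f_def g_def g'_def using fg_eq[OF a that] .
  have hi: "set_integrable lborel {0..1} (h m a)"
    by (intro borel_integrable_atLeastAtMost' h_cont a)
  have hi2: "set_integrable lborel (einterval 0 1) (\<lambda>x. f (g x) * g' x)"
  proof -
    have "set_integrable lborel {0<..<1} (h m a)" by (rule set_integrable_subset[OF hi]) auto
    moreover have "set_integrable lborel {0<..<1} (h m a) = set_integrable lborel {0<..<1} (\<lambda>x. f (g x) * g' x)"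
      by (rule set_integrable_cong) (auto simp: fgh)
    ultimately show ?thesis by (simp add: zero_ereal_def one_ereal_def)
  qed
  have sub: "set_integrable lborel (einterval 0 \<infinity>) f"
          "(LBINT x=0..\<infinity>. f x) = (LBINT x=0..1. f (g x) * g' x)"
  proof -
    have lim0: "((ereal \<circ> g \<circ> real_of_ereal) \<longlongrightarrow> 0) (at_right 0)"
      unfolding zero_ereal_def ereal_tendsto_simps g_def
      by (rule tendsto_eq_intros) (auto intro!: tendsto_eq_intros)
    have lim1: "((ereal \<circ> g \<circ> real_of_ereal) \<longlongrightarrow> \<infinity>) (at_left 1)"
      unfolding one_ereal_def ereal_tendsto_simps g_def by real_asymp
    note SB = interval_integral_substitution_nonneg[of 0 1 g g' f 0 \<infinity>]
    have p1: "(0::ereal) < 1" by simp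
    have p2: "\<And>x. 0 < ereal x \<Longrightarrow> ereal x < 1 \<Longrightarrow> DERIV g x :> g' x"
      unfolding g_def g'_def by (auto intro!: derivative_eq_intros simp: one_ereal_def divide_simps power2_eq_square)
    have p3: "\<And>x. 0 < ereal x \<Longrightarrow> ereal x < 1 \<Longrightarrow> isCont f (g x)" using fc by blast
    have p4: "\<And>x. 0 < ereal x \<Longrightarrow> ereal x < 1 \<Longrightarrow> isCont g' x"
      unfolding g'_def by (auto intro!: continuous_intros simp: one_ereal_def)
    have p5: "\<And>x. 0 < ereal x \<Longrightarrow> ereal x < 1 \<Longrightarrow> 0 \<le> f (g x)"
      unfolding f_def using Q_pos[OF a] by (simp add: less_imp_le)
    have p6: "\<And>x. 0 \<le> ereal x \<Longrightarrow> ereal x \<le> 1 \<Longrightarrow> 0 \<le> g' x" unfolding g'_def by simp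
    show "set_integrable lborel (einterval 0 \<infinity>) f"
      by (rule SB(1)[OF p1 p2 p3 p4 p5 p6 lim0 lim1 hi2])
    show "(LBINT x=0..\<infinity>. f x) = (LBINT x=0..1. f (g x) * g' x)"
      by (rule SB(2)[OF p1 p2 p3 p4 p5 p6 lim0 lim1 hi2])
  qed
  have e1: "(LBINT x=0..1. f (g x) * g' x) = NN m a"
  proof -
    have "(LBINT x=0..1. f (g x) * g' x) = (LINT x:{0<..<1}|lborel. f (g x) * g' x)"
      by (simp add: interval_lebesgue_integral_def zero_ereal_def one_ereal_def)
    also have "\<dots> = (LINT x:{0<..<1}|lborel. h m a x)"
      by (rule set_lebesgue_integral_cong) (auto simp: fgh)
    also have "\<dots> = integral {0<..<1} (h m a)"
      by (rule set_borel_integral_eq_integral(2)) (rule set_integrable_subset[OF hi], auto)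
    also have "\<dots> = NN m a" unfolding NN_def by (simp add: integral_open_interval_real)
    finally show ?thesis .
  qed
  have "(LBINT x=0..\<infinity>. f x) = (LINT x:{0<..}|lborel. f x)"
    by (simp add: interval_lebesgue_integral_def zero_ereal_def)
  have sub1: "set_integrable lborel {0<..} f" using sub(1) by (simp add: zero_ereal_def)
  have "(f has_integral (LINT x:{0<..}|lborel. f x)) {0<..}"
    using set_borel_integral_eq_integral[OF sub1] by (simp add: integrable_integral)
  moreover have "(LINT x:{0<..}|lborel. f x) = NN m a"
    using sub(2) e1 by (simp add: interval_lebesgue_integral_def zero_ereal_def)
  ultimately have "(f has_integral NN m a) {0<..}" by simp
  then have "(f has_integral NN m a) {0..}"
    by (rule has_integral_spike_set_eq[THEN iffD1, rotated -1]) (auto intro: negligible_subset[of "{0}"])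
  then show ?thesis unfolding f_def .
qed


theorem mainTheorem2:
  fixes m :: nat and a :: real
  assumes "a > -1"
  shows "((\<lambda>x::real. 1 / (x^4 + 2*a*x^2 + 1)^(m+1)) has_integral
            (pi/2) * P m a / (2*(a+1)) powr (real m + 1/2)) {0..}
         \<and> P m a = (\<Sum>j=0..m. d j m * a^j)"
proof
  have "NN m a = G m a" using NN_G assms by auto
  also have "\<dots> = (pi/2) * P m a / (2*(a+1)) powr (real m + 1/2)" unfolding G_def P_eq ..
  finally show "((\<lambda>x::real. 1 / (x^4 + 2*a*x^2 + 1)^(m+1)) has_integral
            (pi/2) * P m a / (2*(a+1)) powr (real m + 1/2)) {0..}"
    using transport[OF assms, of m] by simp
  show "P m a = (\<Sum>j=0..m. d j m * a^j)" by (rule P_d)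
qed

end
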